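(* Let $N\ge1$, $K>0$, $r_i>0$, let $(\mu_{ij})$ be a nonnegative, symmetric, irreducible $N\times N$ matrix, and let $\alpha:\mathbb{R}^N\to\mathbb{R}$ be locally Lipschitz with $\alpha(0)=0$, monotone increasing for the componentwise order, and such that there exist positive $R,k,c$ with $c(\sum_jv_j)^k\le\alpha(v)$ for all $v\in[0,\infty)^N$ with $\sum_j|v_j|\ge R$. Let $\bar v$ be the unique positive stationary solution of $$\frac{dv_i}{dt}=v_i\left[r_i-\frac{1}{K}\alpha(v)\right]+\sum_{j=1}^N\mu_{ij}(v_j-v_i),\qquad i=1,\dots,N,$$ and let $v(t)$ be a positive solution of this system defined for all $t\ge0$. Set $\mathcal{E}(v)=\sum_{i=1}^Nv_i^2$ and $\beta(v)=\sum_{i=1}^Nv_i\bar v_i$. Then there exists a constant $C_1$ such that $\mathcal{E}(v(t))+\beta(v(t))\le C_1$ for all $t\ge0$.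
   Context: A stationary solution is a vector at which the right-hand side vanishes for every $i$; positive means all components strictly positive. *)

theory Defs
  imports "HOL-Analysis.Analysis"
begin

text \<open>Vectors in R^N are modelled as real^'n with 'n a finite index type (N = CARD('n) \<ge> 1).
  Matrices are real^'n^'n, entry mu_ij = mu $ i $ j.\<close>

definition locally_lipschitz_fun :: "('a::metric_space \<Rightarrow> real) \<Rightarrow> bool" where
  "locally_lipschitz_fun f \<longleftrightarrow>
     (\<forall>x. \<exists>e>0. \<exists>L. \<forall>y\<in>ball x e. \<forall>z\<in>ball x e. \<bar>f y - f z\<bar> \<le> L * dist y z)"

definition comp_mono :: "(real^'n \<Rightarrow> real) \<Rightarrow> bool" where
  "comp_mono f \<longleftrightarrow> (\<forall>u v. (\<forall>i. u $ i \<le> v $ i) \<longrightarrow> f u \<le> f v)"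

text \<open>Irreducibility of a nonnegative matrix: the directed graph with an edge i -> j
  whenever mu_ij \<noteq> 0 is strongly connected.\<close>
definition irreducible_mat :: "real^'n^'n \<Rightarrow> bool" where
  "irreducible_mat M \<longleftrightarrow> (\<forall>i j. (i, j) \<in> {(a, b). M $ a $ b \<noteq> 0}\<^sup>*)"

definition pos_vec :: "real^'n \<Rightarrow> bool" where
  "pos_vec v \<longleftrightarrow> (\<forall>i. v $ i > 0)"

definition rhs :: "real^'n \<Rightarrow> real \<Rightarrow> real^'n^'n \<Rightarrow> (real^'n \<Rightarrow> real) \<Rightarrow> real^'n \<Rightarrow> real^'n" where
  "rhs r K mu alpha v = (\<chi> i. v $ i * (r $ i - alpha v / K) + (\<Sum>j\<in>UNIV. mu $ i $ j * (v $ j - v $ i)))"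

definition stationary :: "real^'n \<Rightarrow> real \<Rightarrow> real^'n^'n \<Rightarrow> (real^'n \<Rightarrow> real) \<Rightarrow> real^'n \<Rightarrow> bool" where
  "stationary r K mu alpha v \<longleftrightarrow> (\<forall>i. rhs r K mu alpha v $ i = 0)"

definition energy :: "real^'n \<Rightarrow> real" where
  "energy v = (\<Sum>i\<in>UNIV. (v $ i)^2)"

definition beta :: "real^'n \<Rightarrow> real^'n \<Rightarrow> real" where
  "beta vbar v = (\<Sum>i\<in>UNIV. v $ i * vbar $ i)"

end

theory Submission
  imports Defs
begin

theorem lemma4p6:
  fixes K :: real and r :: "real^'n" and mu :: "real^'n^'n"
    and alpha :: "real^'n \<Rightarrow> real" and vbar :: "real^'n" and v :: "real \<Rightarrow> real^'n"
  assumes K_pos: "K > 0"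
    and r_pos: "\<forall>i. r $ i > 0"
    and mu_nonneg: "\<forall>i j. mu $ i $ j \<ge> 0"
    and mu_sym: "\<forall>i j. mu $ i $ j = mu $ j $ i"
    and mu_irred: "irreducible_mat mu"
    and alpha_lip: "locally_lipschitz_fun alpha"
    and alpha_zero: "alpha 0 = 0"
    and alpha_mono: "comp_mono alpha"
    and alpha_growth: "\<exists>R k c. R > 0 \<and> k > 0 \<and> c > 0 \<and>
        (\<forall>w. (\<forall>j. w $ j \<ge> 0) \<and> (\<Sum>j\<in>UNIV. \<bar>w $ j\<bar>) \<ge> R
              \<longrightarrow> c * (\<Sum>j\<in>UNIV. w $ j) powr k \<le> alpha w)"
    and vbar_pos: "pos_vec vbar"
    and vbar_stat: "stationary r K mu alpha vbar"
    and vbar_unique: "\<forall>w. pos_vec w \<and> stationary r K mu alpha w \<longrightarrow> w = vbar"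
    and v_pos: "\<forall>t\<ge>0. pos_vec (v t)"
    and v_ode: "\<forall>t\<ge>0. (v has_vector_derivative rhs r K mu alpha (v t)) (at t within {0..})"
  shows "\<exists>C1. \<forall>t\<ge>0. energy (v t) + beta vbar (v t) \<le> C1"
proof -
  obtain R k c where Rkc: "R > 0" "k > 0" "c > 0"
    and grow: "\<And>w. (\<forall>j. w $ j \<ge> 0) \<Longrightarrow> (\<Sum>j\<in>UNIV. \<bar>w $ j\<bar>) \<ge> R
              \<Longrightarrow> c * (\<Sum>j\<in>UNIV. w $ j) powr k \<le> alpha w"
    using alpha_growth by blast
  define S where "S t = (\<Sum>i\<in>UNIV. v t $ i)" for t
  define D where "D t = (\<Sum>i\<in>UNIV. rhs r K mu alpha (v t) $ i)" for t
  define rs where "rs = (\<Sum>i\<in>UNIV. r $ i)"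
  have rs_ge: "r $ i \<le> rs" for i
    unfolding rs_def by (rule member_le_sum) (use r_pos in \<open>auto intro: less_imp_le\<close>)
  have mu0: "(\<Sum>i\<in>UNIV. \<Sum>j\<in>UNIV. mu $ i $ j * (x $ j - x $ i)) = 0" for x :: "real^'n"
  proof -
    have "(\<Sum>i\<in>UNIV. \<Sum>j\<in>UNIV. mu $ i $ j * (x $ j - x $ i))
        = (\<Sum>i\<in>UNIV. \<Sum>j\<in>UNIV. mu $ i $ j * x $ j) - (\<Sum>i\<in>UNIV. \<Sum>j\<in>UNIV. mu $ i $ j * x $ i)"
      by (simp add: right_diff_distrib sum_subtractf)
    also have "(\<Sum>i\<in>UNIV. \<Sum>j\<in>UNIV. mu $ i $ j * x $ j) = (\<Sum>j\<in>UNIV. \<Sum>i\<in>UNIV. mu $ i $ j * x $ j)"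
      by (rule sum.swap)
    also have "\<dots> = (\<Sum>j\<in>UNIV. \<Sum>i\<in>UNIV. mu $ j $ i * x $ j)"
      using mu_sym by simp
    finally show ?thesis by simp
  qed
  have Dform: "D t = (\<Sum>i\<in>UNIV. v t $ i * r $ i) - alpha (v t) / K * S t" for t
  proof -
    have "D t = (\<Sum>i\<in>UNIV. v t $ i * r $ i - v t $ i * (alpha (v t) / K))
          + (\<Sum>i\<in>UNIV. \<Sum>j\<in>UNIV. mu $ i $ j * (v t $ j - v t $ i))"
      unfolding D_def rhs_def by (simp add: sum.distrib right_diff_distrib)
    also have "\<dots> = (\<Sum>i\<in>UNIV. v t $ i * r $ i) - alpha (v t) / K * S t"
      unfolding mu0 S_def by (simp add: sum_subtractf sum_distrib_left sum_divide_distrib mult.commute)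
    finally show ?thesis .
  qed
  define M0 where "M0 = max R ((rs * K / c + 1) powr (1 / k))"
  have rs_pos: "rs \<ge> 0" using rs_ge r_pos by (meson less_imp_le order_trans)
  have Dneg: "D t \<le> 0" if t: "t \<ge> 0" and SM: "S t \<ge> M0" for t
  proof -
    let ?x = "v t"
    have xp: "\<forall>j. ?x $ j > 0" using v_pos t unfolding pos_vec_def by auto
    have SR: "S t \<ge> R" using SM unfolding M0_def by auto
    have Spos: "S t > 0" using SR Rkc by auto
    have abs: "(\<Sum>j\<in>UNIV. \<bar>?x $ j\<bar>) = S t" unfolding S_def using xp
      by (intro sum.cong) (auto simp: less_imp_le)
    have al: "c * S t powr k \<le> alpha ?x"
      using grow[of ?x] xp abs SR unfolding S_def by (auto simp: less_imp_le)
    have pk: "S t powr k \<ge> rs * K / c + 1"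
    proof -
      have b: "0 \<le> (rs * K / c + 1) powr (1 / k)" by simp
      have "(rs * K / c + 1) powr (1 / k) \<le> S t" using SM unfolding M0_def by auto
      hence "((rs * K / c + 1) powr (1 / k)) powr k \<le> S t powr k"
        using b Rkc by (intro powr_mono2) auto
      moreover have "((rs * K / c + 1) powr (1 / k)) powr k = rs * K / c + 1"
        using Rkc K_pos rs_pos by (simp add: powr_powr)
      ultimately show ?thesis by simp
    qed
    have "c * S t powr k \<ge> c * (rs * K / c + 1)"
      by (rule mult_left_mono) (use pk Rkc in auto)
    also have "c * (rs * K / c + 1) = rs * K + c" using Rkc by (simp add: field_simps)
    finally have "c * S t powr k \<ge> rs * K + c" .
    hence al2: "alpha ?x \<ge> rs * K" using al Rkc by linarith
    have "alpha ?x / K \<ge> rs" using al2 K_pos by (simp add: pos_le_divide_eq)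
    hence "alpha ?x / K * S t \<ge> rs * S t" using Spos by (intro mult_right_mono) auto
    moreover have "(\<Sum>i\<in>UNIV. ?x $ i * r $ i) \<le> (\<Sum>i\<in>UNIV. ?x $ i * rs)"
      using xp rs_ge by (intro sum_mono mult_left_mono) (auto simp: less_imp_le)
    moreover have "(\<Sum>i\<in>UNIV. ?x $ i * rs) = rs * S t"
      unfolding S_def sum_distrib_left by (simp add: mult.commute)
    ultimately show ?thesis using Dform[of t] by linarith
  qed
  have derS: "(S has_real_derivative D t) (at t within {0..})" if "t \<ge> 0" for t
  proof -
    have "((\<lambda>t. \<Sum>i\<in>UNIV. v t $ i) has_vector_derivative (\<Sum>i\<in>UNIV. rhs r K mu alpha (v t) $ i)) (at t within {0..})"
      by (intro has_vector_derivative_sum bounded_linear.has_vector_derivative[OF bounded_linear_vec_nth])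
         (use v_ode that in auto)
    thus ?thesis unfolding has_real_derivative_iff_has_vector_derivative S_def[abs_def] D_def .
  qed
  have contS: "continuous_on {0..} S"
    unfolding continuous_on_eq_continuous_within
  proof
    fix x :: real assume "x \<in> {0..}"
    hence "(S has_vector_derivative D x) (at x within {0..})"
      using derS[of x] by (simp add: has_real_derivative_iff_has_vector_derivative)
    thus "continuous (at x within {0..}) S" by (rule has_vector_derivative_continuous)
  qed
  define M where "M = max (S 0) M0"
  have bound: "S t \<le> M" if t: "t \<ge> 0" for t
  proof (rule ccontr)
    assume "\<not> S t \<le> M"
    hence St: "S t > M" by simp
    define t1 where "t1 = t"
    have t1pos: "t1 > 0" using St t unfolding t1_def M_def
      by (metis less_eq_real_def max.cobounded1 not_le)
    define A where "A = {0..t1} \<inter> S -` {..M}"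
    have cA: "closed A" unfolding A_def
      by (rule continuous_closed_preimage) (auto intro: continuous_on_subset[OF contS])
    have "0 \<in> A" unfolding A_def M_def using t1pos by auto
    hence neA: "A \<noteq> {}" by blast
    have bA: "bdd_above A" unfolding A_def by (auto intro: bdd_aboveI[of _ t1])
    define t0 where "t0 = Sup A"
    have t0A: "t0 \<in> A" unfolding t0_def using closed_contains_Sup[OF neA bA cA] .
    hence t0: "0 \<le> t0" "t0 \<le> t1" "S t0 \<le> M" unfolding A_def by auto
    have t01: "t0 < t1" using t0 St unfolding t1_def by (cases "t0 = t") auto
    have above: "S z > M" if "t0 < z" "z \<le> t1" for z
    proof (rule ccontr)
      assume "\<not> S z > M"
      hence "z \<in> A" unfolding A_def using that t0 by auto
      hence "z \<le> t0" unfolding t0_def using bA by (rule cSup_upper)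
      thus False using that by simp
    qed
    have dat: "(S has_real_derivative D z) (at z)" if "t0 < z" for z
    proof -
      have "z \<in> interior {0..}" using that t0 by simp
      hence e: "at z within {0..} = at z" by (rule at_within_interior)
      have "(S has_real_derivative D z) (at z within {0..})" using derS[of z] that t0 by simp
      thus ?thesis unfolding e .
    qed
    obtain l z where z: "t0 < z" "z < t1" "(S has_real_derivative l) (at z)"
      and eq: "S t1 - S t0 = (t1 - t0) * l"
    proof -
      have "continuous_on {t0..t1} S" using t0 by (auto intro: continuous_on_subset[OF contS])
      moreover have "S differentiable at x" if "t0 < x" "x < t1" for x
        using dat[of x] that unfolding differentiable_def has_field_derivative_def by blast
      ultimately obtain l z where "t0 < z" "z < t1" "(S has_real_derivative l) (at z)"
          "S t1 - S t0 = (t1 - t0) * l"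
        using MVT[OF t01] by metis
      thus ?thesis by (rule that)
    qed
    have "l = D z" using DERIV_unique[OF z(3) dat[OF z(1)]] .
    moreover have "D z \<le> 0" using Dneg[of z] above[of z] z t0 unfolding M_def by auto
    ultimately have "(t1 - t0) * l \<le> 0" using t01 by (simp add: mult_nonneg_nonpos)
    hence "S t1 \<le> S t0" using eq by linarith
    thus False using t0 St unfolding t1_def by linarith
  qed
  define B where "B = (\<Sum>i\<in>UNIV. vbar $ i)"
  have M_nn: "M \<ge> 0" unfolding M_def M0_def using Rkc by auto
  show ?thesis
  proof (intro exI allI impI)
    fix t :: real assume t: "t \<ge> 0"
    let ?x = "v t"
    have xp: "\<And>j. ?x $ j \<ge> 0" using v_pos t unfolding pos_vec_def by (auto intro: less_imp_le)
    have vbp: "\<And>j. vbar $ j \<ge> 0" using vbar_pos unfolding pos_vec_def by (auto intro: less_imp_le)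
    have le: "?x $ i \<le> S t" for i unfolding S_def by (rule member_le_sum) (use xp in auto)
    have leB: "vbar $ i \<le> B" for i unfolding B_def by (rule member_le_sum) (use vbp in auto)
    have S0: "S t \<ge> 0" unfolding S_def using xp by (simp add: sum_nonneg)
    have "energy ?x \<le> (\<Sum>i\<in>UNIV. ?x $ i * S t)"
      unfolding energy_def power2_eq_square using xp le by (intro sum_mono mult_left_mono) auto
    also have "\<dots> = S t * S t" unfolding S_def by (simp add: sum_distrib_right)
    also have "\<dots> \<le> M * M" using S0 bound[OF t] by (simp add: mult_mono)
    finally have e: "energy ?x \<le> M * M" .
    have "beta vbar ?x \<le> (\<Sum>i\<in>UNIV. ?x $ i * B)"
      unfolding beta_def using xp leB by (intro sum_mono mult_left_mono) auto
    also have "\<dots> = S t * B" unfolding S_def by (simp add: sum_distrib_right)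
    also have "\<dots> \<le> M * B" using bound[OF t] B_def vbp by (simp add: mult_right_mono sum_nonneg)
    finally show "energy ?x + beta vbar ?x \<le> M * M + M * B" using e by linarith
  qed
qed
end
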